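(* Let $m\ge2$ and let $f$ be the two-digit base-$m$ Kaprekar map on $X=\{0,\dots,m^2-1\}$. There exists a fixed set $K(x)$ with $|K(x)|=2$ if and only if $5\mid m+1$. In that case such a fixed set is unique.
   Context: For an integer $m\ge2$, $X=\{0,1,\dots,m^2-1\}$, each element written with exactly two base-$m$ digits (leading zeros allowed); $f(x)=D(x)-A(x)$ where $D(x)$ (resp. $A(x)$) has the digits of $x$ in nonincreasing (resp. nondecreasing) order. The step $S(x)$ is the least $s\ge0$ such that $f^{s+t}(x)=f^s(x)$ for some $t\ge1$; $T(x)$ is the least $t\ge1$ with $f^{S(x)+t}(x)=f^{S(x)}(x)$; the fixed set of $x$ is $K(x)=\{f^{S(x)+i}(x):0\le i<T(x)\}$. *)

theory Defs
  imports Main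
begin

definition kapD :: "nat \<Rightarrow> nat \<Rightarrow> nat" where
  "kapD m x = max (x div m) (x mod m) * m + min (x div m) (x mod m)"

definition kapA :: "nat \<Rightarrow> nat \<Rightarrow> nat" where
  "kapA m x = min (x div m) (x mod m) * m + max (x div m) (x mod m)"

definition kap :: "nat \<Rightarrow> nat \<Rightarrow> nat" where
  "kap m x = kapD m x - kapA m x"

definition kstep :: "nat \<Rightarrow> nat \<Rightarrow> nat" where
  "kstep m x = (LEAST s. \<exists>t\<ge>1. (kap m ^^ (s + t)) x = (kap m ^^ s) x)"

definition kperiod :: "nat \<Rightarrow> nat \<Rightarrow> nat" where
  "kperiod m x = (LEAST t. t \<ge> 1 \<and> (kap m ^^ (kstep m x + t)) x = (kap m ^^ kstep m x) x)"

definition fixedset :: "nat \<Rightarrow> nat \<Rightarrow> nat set" where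
  "fixedset m x = {(kap m ^^ (kstep m x + i)) x | i. i < kperiod m x}"

end

theory Submission
  imports Defs
begin

lemma c: "((f::nat\<Rightarrow>nat)^^(a+t)) z = (f^^t) ((f^^a) z)"
  by (subst add.commute) (simp add: funpow_add)
lemma per_basic:
  fixes f :: "nat \<Rightarrow> nat"
  assumes ex: "\<exists>s t. t\<ge>1 \<and> (f^^(s+t)) x = (f^^s) x"
  defines "S \<equiv> LEAST s. \<exists>t\<ge>1. (f^^(s+t)) x = (f^^s) x"
  defines "T \<equiv> LEAST t. t\<ge>1 \<and> (f^^(S+t)) x = (f^^S) x"
  shows "T \<ge> 1 \<and> (f^^T) ((f^^S) x) = (f^^S) x \<and> (\<forall>t. 1\<le>t \<and> t<T \<longrightarrow> (f^^t) ((f^^S) x) \<noteq> (f^^S) x)"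
proof -
  have "\<exists>t\<ge>1. (f^^(S+t)) x = (f^^S) x"
    unfolding S_def using ex by (rule LeastI_ex)
  then have "T\<ge>1 \<and> (f^^(S+T)) x = (f^^S) x" unfolding T_def
    by (rule LeastI_ex)
  moreover have "\<forall>t. 1\<le>t \<and> t<T \<longrightarrow> (f^^(S+t)) x \<noteq> (f^^S) x"
    unfolding T_def using not_less_Least by blast
  ultimately show ?thesis by (simp only: c)
qed

lemma orbit_card:
  fixes f :: "nat \<Rightarrow> nat"
  assumes "T\<ge>1" "(f^^T) y = y" "\<forall>t. 1\<le>t \<and> t<T \<longrightarrow> (f^^t) y \<noteq> y"
  shows "card ((\<lambda>i. (f^^i) y) ` {..<T}) = T"
proof -
  have "inj_on (\<lambda>i. (f^^i) y) {..<T}"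
  proof (rule inj_onI, rule ccontr)
    fix i j assume i: "i \<in> {..<T}" and j: "j \<in> {..<T}" and e: "(f^^i) y = (f^^j) y" and ne: "i \<noteq> j"
    have key: "(f^^(T-b+a)) y = y" if "a<b" "b<T" "(f^^a) y = (f^^b) y" for a b
    proof -
      have "(f^^(T-b+a)) y = (f^^(T-b)) ((f^^a) y)" using c[where a=a and t="T-b" and z=y] by (simp add: add.commute)
      also have "\<dots> = (f^^(T-b)) ((f^^b) y)" using that by simp
      also have "\<dots> = (f^^(b + (T-b))) y" by (simp only: c)
      also have "\<dots> = y" using that assms by simp
      finally show ?thesis .
    qed
    show False
    proof (cases "i<j")
      case True
      have k: "(f^^(T-j+i)) y = y" using key[of i j] True e j by simp
      have "1 \<le> T-j+i \<and> T-j+i < T" using True j by auto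
      then show ?thesis using k assms(3) by blast
    next
      case False
      then have "j<i" using ne by simp
      have k: "(f^^(T-i+j)) y = y" using key[of j i] \<open>j<i\<close> e i by simp
      have "1 \<le> T-i+j \<and> T-i+j < T" using \<open>j<i\<close> i by auto
      then show ?thesis using k assms(3) by blast
    qed
  qed
  then show ?thesis by (simp add: card_image)
qed

lemma fixedset_eq:
  "fixedset m x = (\<lambda>i. (kap m^^i) ((kap m^^kstep m x) x)) ` {..<kperiod m x}"
proof -
  show ?thesis unfolding fixedset_def c by blast
qed

lemma kap_formula:
  assumes "m \<ge> 1"
  shows "kap m z = (max (z div m) (z mod m) - min (z div m) (z mod m)) * (m-1)"
proof -
  define M where "M = max (z div m) (z mod m)"
  define n where "n = min (z div m) (z mod m)"
  have "n \<le> M" unfolding M_def n_def by simp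
  then obtain d where d: "M = n + d" using le_Suc_ex by blast
  have "kap m z = M*m + n - (n*m + M)" unfolding kap_def kapD_def kapA_def M_def n_def by simp
  also have "\<dots> = d*m - d" using d by (simp add: algebra_simps)
  also have "\<dots> = d*(m-1)" by (simp add: diff_mult_distrib2)
  finally show ?thesis using d unfolding M_def n_def by simp
qed

lemma maxmin_le: "(a::nat) < m \<Longrightarrow> b < m \<Longrightarrow> max a b - min a b \<le> m - 1"
  by (auto simp add: max_def min_def)

lemma kap_shape:
  assumes "m \<ge> 2" "z < m^2"
  shows "\<exists>e. e \<le> m-1 \<and> kap m z = e*(m-1)"
proof -
  have "z div m < m" using assms by (simp add: div_less_iff_less_mult power2_eq_square)
  moreover have "z mod m < m" using assms by simp
  ultimately have "max (z div m) (z mod m) - min (z div m) (z mod m) \<le> m - 1" by (rule maxmin_le)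
  moreover have "kap m z = (max (z div m) (z mod m) - min (z div m) (z mod m)) * (m-1)"
    using kap_formula[of m z] assms by simp
  ultimately show ?thesis by blast
qed

lemma kap_bound:
  assumes "m \<ge> 2" "z < m^2"
  shows "kap m z < m^2"
proof -
  obtain e where e: "e \<le> m-1" "kap m z = e*(m-1)" using kap_shape[OF assms] by blast
  have "kap m z \<le> (m-1)*(m-1)" using e by (simp add: mult_le_mono1)
  also have "\<dots> < m*m" using assms by (simp add: mult_strict_mono)
  finally show ?thesis by (simp add: power2_eq_square)
qed

lemma kap_e:
  assumes "m \<ge> 2" "1 \<le> e" "e \<le> m-1"
  shows "kap m (e*(m-1)) = nat \<bar>int m + 1 - 2*int e\<bar> * (m-1)"
proof -
  obtain e' where e': "e = Suc e'" using assms by (cases e) auto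
  define r where "r = m - e - 1"
  have r: "m = e + Suc r" unfolding r_def using assms by linarith
  have eq: "e*(m-1) = (e-1)*m + (m-e)"
    unfolding r e' by (simp add: algebra_simps)
  have lt: "m - e < m" using assms by simp
  have dv: "e*(m-1) div m = e-1"
    unfolding eq using lt by simp
  have md: "e*(m-1) mod m = m-e"
    unfolding eq using lt by simp
  have "max (e-1) (m-e) - min (e-1) (m-e) = nat \<bar>int m + 1 - 2*int e\<bar>" using assms by linarith
  then show ?thesis using kap_formula[of m "e*(m-1)"] assms dv md by simp
qed

lemma kap0: "kap m 0 = 0" unfolding kap_def kapD_def kapA_def by simp

lemma orbit_bound:
  assumes "m \<ge> 2" "x < m^2" shows "(kap m^^i) x < m^2"
  using assms by (induction i) (auto simp: kap_bound)

lemma exists_cycle: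
  assumes "m \<ge> 2" "x < m^2"
  shows "\<exists>s t. t\<ge>1 \<and> (kap m^^(s+t)) x = (kap m^^s) x"
proof -
  have "\<not> inj_on (\<lambda>i. (kap m^^i) x) {0..m^2}"
  proof
    assume "inj_on (\<lambda>i. (kap m^^i) x) {0..m^2}"
    moreover have "(\<lambda>i. (kap m^^i) x) ` {0..m^2} \<subseteq> {..<m^2}" using orbit_bound assms by auto
    ultimately have "card {0..m^2} \<le> card {..<m^2::nat}" using card_inj_on_le by blast
    then show False by simp
  qed
  then obtain i j where "i \<noteq> j" "(kap m^^i) x = (kap m^^j) x" unfolding inj_on_def by blast
  then show ?thesis
  proof (cases "i<j")
    case True
    then show ?thesis using \<open>(kap m^^i) x = (kap m^^j) x\<close>
      by (intro exI[of _ i] exI[of _ "j-i"]) auto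
  next
    case False
    then have "j<i" using \<open>i\<noteq>j\<close> by simp
    then show ?thesis using \<open>(kap m^^i) x = (kap m^^j) x\<close>
      by (intro exI[of _ j] exI[of _ "i-j"]) auto
  qed
qed

lemma card2_char:
  assumes m: "m \<ge> 2" and x: "x < m^2" and cd: "card (fixedset m x) = 2"
  shows "\<exists>k. 5*k = m+1 \<and> fixedset m x = {k*(m-1), 3*k*(m-1)}"
proof -
  define y where "y = (kap m^^kstep m x) x"
  have pb: "kperiod m x \<ge> 1 \<and> (kap m^^kperiod m x) y = y \<and>
     (\<forall>t. 1\<le>t \<and> t<kperiod m x \<longrightarrow> (kap m^^t) y \<noteq> y)"
    using per_basic[of "kap m" x, OF exists_cycle[OF m x]]
    unfolding y_def kperiod_def kstep_def by blast
  have fs: "fixedset m x = (\<lambda>i. (kap m^^i) y) ` {..<kperiod m x}"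
    unfolding y_def by (rule fixedset_eq)
  have "card (fixedset m x) = kperiod m x" unfolding fs
    using orbit_card[of "kperiod m x" "kap m" y] pb by blast
  then have T2: "kperiod m x = 2" using cd by simp
  have "{..<2::nat} = {0,1}" by auto
  then have fs2: "fixedset m x = {y, kap m y}" unfolding fs T2 by simp
  have cyc: "kap m (kap m y) = y" using pb T2 by (simp add: numeral_2_eq_2)
  have ne: "kap m y \<noteq> y" using pb T2 by force
  have yb: "y < m^2" unfolding y_def using orbit_bound[OF m x] .
  have fyb: "kap m y < m^2" using kap_bound[OF m yb] .
  obtain e1 where e1: "e1 \<le> m-1" "kap m y = e1*(m-1)" using kap_shape[OF m yb] by blast
  obtain e2 where e2: "e2 \<le> m-1" "y = e2*(m-1)" using kap_shape[OF m fyb] cyc by metis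
  have m1: "m - 1 > 0" using m by simp
  have e2p: "e2 \<ge> 1"
  proof (rule ccontr)
    assume "\<not> e2 \<ge> 1" then have "y = 0" using e2 by simp
    then show False using ne kap0 by simp
  qed
  have e1p: "e1 \<ge> 1"
  proof (rule ccontr)
    assume "\<not> e1 \<ge> 1" then have "kap m y = 0" using e1 by simp
    then show False using ne kap0 cyc by simp
  qed
  have "e1*(m-1) = nat \<bar>int m + 1 - 2*int e2\<bar> * (m-1)"
    using kap_e[OF m e2p e2(1)] e1 e2 by auto
  then have g1: "e1 = nat \<bar>int m + 1 - 2*int e2\<bar>" using m1 by simp
  have "e2*(m-1) = nat \<bar>int m + 1 - 2*int e1\<bar> * (m-1)"
    using kap_e[OF m e1p e1(1)] e1 e2 cyc by auto
  then have g2: "e2 = nat \<bar>int m + 1 - 2*int e1\<bar>" using m1 by simp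
  have "e1 \<noteq> e2" using ne e1 e2 by auto
  then have "(5*e2 = m+1 \<and> e1 = 3*e2) \<or> (5*e1 = m+1 \<and> e2 = 3*e1)" using g1 g2 by linarith
  then show ?thesis
  proof
    assume h: "5*e2 = m+1 \<and> e1 = 3*e2"
    show ?thesis using h fs2 e1 e2 by (intro exI[of _ e2]) auto
  next
    assume h: "5*e1 = m+1 \<and> e2 = 3*e1"
    show ?thesis using h fs2 e1 e2 by (intro exI[of _ e1]) auto
  qed
qed

lemma card2_exists:
  assumes m: "m \<ge> 2" and k: "5*k = m+1"
  shows "(k*(m-1)) < m^2 \<and> fixedset m (k*(m-1)) = {k*(m-1), 3*k*(m-1)}
     \<and> card (fixedset m (k*(m-1))) = 2"
proof -
  define x where "x = k*(m-1)"
  have k1: "k \<ge> 1" using k by linarith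
  have k3: "3*k \<le> m-1" using k k1 by linarith
  have m1: "m - 1 > 0" using m by simp
  have f1: "kap m x = 3*k*(m-1)"
    using kap_e[OF m k1] k3 k unfolding x_def by (simp add: nat_eq_iff)
  have "nat \<bar>int m + 1 - 2*int (3*k)\<bar> = k" using k by linarith
  then have f2: "kap m (3*k*(m-1)) = x"
    using kap_e[OF m _ k3] k1 unfolding x_def by simp
  have neq: "kap m x \<noteq> x" using f1 m1 k1 unfolding x_def by simp
  have cyc: "(kap m^^2) x = x" using f1 f2 by (simp add: numeral_2_eq_2)
  have S0: "kstep m x = 0" unfolding kstep_def
    by (rule Least_eq_0) (use f1 f2 in \<open>intro exI[of _ 2]; simp add: numeral_2_eq_2\<close>)
  have T2: "kperiod m x = 2" unfolding kperiod_def S0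
  proof (rule Least_equality)
    show "2 \<ge> (1::nat) \<and> (kap m ^^ (0 + 2)) x = (kap m ^^ 0) x" using f1 f2 by (simp add: numeral_2_eq_2)
  next
    fix t assume "t \<ge> 1 \<and> (kap m ^^ (0 + t)) x = (kap m ^^ 0) x"
    moreover have "t \<noteq> 1 \<or> \<not> (kap m ^^ (0 + t)) x = (kap m ^^ 0) x" using neq by auto
    ultimately show "2 \<le> t" by linarith
  qed
  have "{..<2::nat} = {0,1}" by auto
  then have fs: "fixedset m x = {x, 3*k*(m-1)}" unfolding fixedset_eq S0 T2 using f1 by simp
  have xb: "x < m^2"
  proof -
    have "x \<le> (m-1)*(m-1)" unfolding x_def using k3 by (simp add: mult_le_mono1)
    also have "\<dots> < m*m" using m by (simp add: mult_strict_mono)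
    finally show ?thesis by (simp add: power2_eq_square)
  qed
  show ?thesis using fs neq f1 xb unfolding x_def by simp
qed

theorem lemma3p3p4:
  fixes m :: nat
  assumes "m \<ge> 2"
  shows "((\<exists>x < m^2. card (fixedset m x) = 2) \<longleftrightarrow> 5 dvd (m + 1))
    \<and> (5 dvd (m + 1) \<longrightarrow> (\<exists>!K. \<exists>x < m^2. K = fixedset m x \<and> card K = 2))"
proof (intro conjI iffI impI)
  assume "\<exists>x < m^2. card (fixedset m x) = 2"
  then obtain x where "x < m^2" "card (fixedset m x) = 2" by blast
  then show "5 dvd (m+1)" using card2_char[OF assms] by (metis dvd_triv_left)
next
  assume "5 dvd (m+1)"
  then obtain k where k: "5*k = m+1" by (metis dvd_def)
  then show "\<exists>x < m^2. card (fixedset m x) = 2" using card2_exists[OF assms k] by blast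
next
  assume "5 dvd (m+1)"
  then obtain k where k: "5*k = m+1" by (metis dvd_def)
  have ex: "\<exists>x < m^2. {k*(m-1), 3*k*(m-1)} = fixedset m x \<and> card {k*(m-1), 3*k*(m-1)} = 2"
    using card2_exists[OF assms k] by metis
  show "\<exists>!K. \<exists>x < m^2. K = fixedset m x \<and> card K = 2"
  proof (rule ex1I[of _ "{k*(m-1), 3*k*(m-1)}"])
    show "\<exists>x < m^2. {k*(m-1), 3*k*(m-1)} = fixedset m x \<and> card {k*(m-1), 3*k*(m-1)} = 2"
      by (rule ex)
  next
    fix K assume "\<exists>x < m^2. K = fixedset m x \<and> card K = 2"
    then obtain x where x: "x < m^2" "K = fixedset m x" "card K = 2" by blast
    then obtain k' where "5*k' = m+1" "fixedset m x = {k'*(m-1), 3*k'*(m-1)}"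
      using card2_char[OF assms] by blast
    moreover have "k' = k" using k \<open>5*k' = m+1\<close> by simp
    ultimately show "K = {k*(m-1), 3*k*(m-1)}" using x by simp
  qed
qed

end
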